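(* Let $(R_0,R_1,s,t,i,\circ)$ be a strict $2$-rack. Put $R:=R_1$ and $N:=i(R_0)\subset R_1$, and consider the maps $i\circ s,\ i\circ t:R\to N$. Then $N$ is a subrack of $R$, $i\circ s$ and $i\circ t$ are rack morphisms whose restrictions to $N$ are the identity of $N$, and $\ker(s)$ and $\ker(t)$ act trivially on each other (i.e. $f\lhd g=f$ and $g\lhd f=g$ for $f\in\ker(t)$, $g\in\ker(s)$). Thus $(R,N,i\circ s,i\circ t)$ is a 1-cat rack.
   Context: A (right) rack is a set with a binary operation $\lhd$ such that each $x\mapsto x\lhd y$ is bijective and $(x\lhd y)\lhd z=(x\lhd z)\lhd(y\lhd z)$; it is pointed if it has an element $1$ with $1\lhd x=1$ and $x\lhd 1=x$ for all $x$. A strict $2$-rack is a category object in racks: pointed racks $R_0$, $R_1$ with morphisms of pointed racks $s,t:R_1\to R_0$, $i:R_0\to R_1$ and a composition $\circ:R_1\times_{R_0}R_1\to R_1$ (on pairs $(g,f)$ with $s(g)=t(f)$) that is a rack morphism for the componentwise rack structure, satisfying the category axioms ($s\circ i=t\circ i=\mathrm{id}$, associativity, identities). $\ker(s)=s^{-1}(1)$, $\ker(t)=t^{-1}(1)$. A 1-cat rack consists of a pointed rack $R$, a subrack $N$ and two rack morphisms $s',t':R\to N$ with $s'|_N=t'|_N=\mathrm{id}_N$ such that $\ker(s')$ and $\ker(t')$ act trivially on each other. *)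

theory Defs
  imports Main
begin

text \<open>Racks are represented by a carrier set and a binary operation (written x \<lhd> y as op x y).\<close>

definition rack :: "'a set \<Rightarrow> ('a \<Rightarrow> 'a \<Rightarrow> 'a) \<Rightarrow> bool" where
  "rack A op \<longleftrightarrow>
     (\<forall>x\<in>A. \<forall>y\<in>A. op x y \<in> A) \<and>
     (\<forall>y\<in>A. bij_betw (\<lambda>x. op x y) A A) \<and>
     (\<forall>x\<in>A. \<forall>y\<in>A. \<forall>z\<in>A. op (op x y) z = op (op x z) (op y z))"

definition pointed_rack :: "'a set \<Rightarrow> ('a \<Rightarrow> 'a \<Rightarrow> 'a) \<Rightarrow> 'a \<Rightarrow> bool" where
  "pointed_rack A op e \<longleftrightarrow> rack A op \<and> e \<in> A \<and>
     (\<forall>x\<in>A. op e x = e \<and> op x e = x)"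

definition rack_hom :: "'a set \<Rightarrow> ('a \<Rightarrow> 'a \<Rightarrow> 'a) \<Rightarrow> 'b set \<Rightarrow> ('b \<Rightarrow> 'b \<Rightarrow> 'b) \<Rightarrow> ('a \<Rightarrow> 'b) \<Rightarrow> bool" where
  "rack_hom A opA B opB f \<longleftrightarrow> (\<forall>x\<in>A. f x \<in> B) \<and>
     (\<forall>x\<in>A. \<forall>y\<in>A. f (opA x y) = opB (f x) (f y))"

definition pointed_rack_hom :: "'a set \<Rightarrow> ('a \<Rightarrow> 'a \<Rightarrow> 'a) \<Rightarrow> 'a \<Rightarrow> 'b set \<Rightarrow> ('b \<Rightarrow> 'b \<Rightarrow> 'b) \<Rightarrow> 'b \<Rightarrow> ('a \<Rightarrow> 'b) \<Rightarrow> bool" where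
  "pointed_rack_hom A opA eA B opB eB f \<longleftrightarrow> rack_hom A opA B opB f \<and> f eA = eB"

definition subrack :: "'a set \<Rightarrow> 'a set \<Rightarrow> ('a \<Rightarrow> 'a \<Rightarrow> 'a) \<Rightarrow> bool" where
  "subrack N A op \<longleftrightarrow> N \<subseteq> A \<and> rack N op"

text \<open>Strict 2-rack: category object in pointed racks. The composition cmp g f is
  defined on pairs with s g = t f (the fibre product R1 \<times>_R0 R1 with componentwise rack structure).\<close>
definition strict_2rack ::
  "'a set \<Rightarrow> ('a \<Rightarrow> 'a \<Rightarrow> 'a) \<Rightarrow> 'a \<Rightarrow> 'b set \<Rightarrow> ('b \<Rightarrow> 'b \<Rightarrow> 'b) \<Rightarrow> 'b \<Rightarrow>
   ('b \<Rightarrow> 'a) \<Rightarrow> ('b \<Rightarrow> 'a) \<Rightarrow> ('a \<Rightarrow> 'b) \<Rightarrow> ('b \<Rightarrow> 'b \<Rightarrow> 'b) \<Rightarrow> bool" where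
  "strict_2rack R0 op0 e0 R1 op1 e1 s t i cmp \<longleftrightarrow>
     pointed_rack R0 op0 e0 \<and> pointed_rack R1 op1 e1 \<and>
     pointed_rack_hom R1 op1 e1 R0 op0 e0 s \<and>
     pointed_rack_hom R1 op1 e1 R0 op0 e0 t \<and>
     pointed_rack_hom R0 op0 e0 R1 op1 e1 i \<and>
     (\<forall>g\<in>R1. \<forall>f\<in>R1. s g = t f \<longrightarrow> cmp g f \<in> R1) \<and>
     (\<forall>g\<in>R1. \<forall>f\<in>R1. \<forall>g'\<in>R1. \<forall>f'\<in>R1. s g = t f \<longrightarrow> s g' = t f' \<longrightarrow>
        cmp (op1 g g') (op1 f f') = op1 (cmp g f) (cmp g' f')) \<and>
     (\<forall>x\<in>R0. s (i x) = x \<and> t (i x) = x) \<and>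
     (\<forall>g\<in>R1. \<forall>f\<in>R1. s g = t f \<longrightarrow> s (cmp g f) = s f \<and> t (cmp g f) = t g) \<and>
     (\<forall>h\<in>R1. \<forall>g\<in>R1. \<forall>f\<in>R1. s h = t g \<longrightarrow> s g = t f \<longrightarrow>
        cmp (cmp h g) f = cmp h (cmp g f)) \<and>
     (\<forall>f\<in>R1. cmp (i (t f)) f = f \<and> cmp f (i (s f)) = f)"

definition rack_kernel :: "'b set \<Rightarrow> ('b \<Rightarrow> 'a) \<Rightarrow> 'a \<Rightarrow> 'b set" where
  "rack_kernel A f e = {x\<in>A. f x = e}"

definition onecat_rack ::
  "'a set \<Rightarrow> ('a \<Rightarrow> 'a \<Rightarrow> 'a) \<Rightarrow> 'a \<Rightarrow> 'a set \<Rightarrow> ('a \<Rightarrow> 'a) \<Rightarrow> ('a \<Rightarrow> 'a) \<Rightarrow> bool" where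
  "onecat_rack R op e N s' t' \<longleftrightarrow>
     pointed_rack R op e \<and> subrack N R op \<and>
     rack_hom R op N op s' \<and> rack_hom R op N op t' \<and>
     (\<forall>x\<in>N. s' x = x \<and> t' x = x) \<and>
     (\<forall>f\<in>rack_kernel R s' e. \<forall>g\<in>rack_kernel R t' e. op f g = f \<and> op g f = g)"

end

theory Submission
  imports Defs
begin

theorem mainTheorem4:
  fixes R0 :: "'a set" and op0 :: "'a \<Rightarrow> 'a \<Rightarrow> 'a" and e0 :: 'a
    and R1 :: "'b set" and op1 :: "'b \<Rightarrow> 'b \<Rightarrow> 'b" and e1 :: 'b
    and s t :: "'b \<Rightarrow> 'a" and i :: "'a \<Rightarrow> 'b" and cmp :: "'b \<Rightarrow> 'b \<Rightarrow> 'b"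
  assumes "strict_2rack R0 op0 e0 R1 op1 e1 s t i cmp"
  shows "subrack (i ` R0) R1 op1
    \<and> rack_hom R1 op1 (i ` R0) op1 (i \<circ> s)
    \<and> rack_hom R1 op1 (i ` R0) op1 (i \<circ> t)
    \<and> (\<forall>x\<in>i ` R0. (i \<circ> s) x = x \<and> (i \<circ> t) x = x)
    \<and> (\<forall>f\<in>rack_kernel R1 t e0. \<forall>g\<in>rack_kernel R1 s e0. op1 f g = f \<and> op1 g f = g)
    \<and> onecat_rack R1 op1 e1 (i ` R0) (i \<circ> s) (i \<circ> t)"
proof -
  obtain P0: "pointed_rack R0 op0 e0" and P1: "pointed_rack R1 op1 e1"
    and Hs: "pointed_rack_hom R1 op1 e1 R0 op0 e0 s"
    and Ht: "pointed_rack_hom R1 op1 e1 R0 op0 e0 t"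
    and Hi: "pointed_rack_hom R0 op0 e0 R1 op1 e1 i"
    and C2: "\<forall>g\<in>R1. \<forall>f\<in>R1. \<forall>g'\<in>R1. \<forall>f'\<in>R1. s g = t f \<longrightarrow> s g' = t f' \<longrightarrow>
        cmp (op1 g g') (op1 f f') = op1 (cmp g f) (cmp g' f')"
    and C3: "\<forall>x\<in>R0. s (i x) = x \<and> t (i x) = x"
    and C6: "\<forall>f\<in>R1. cmp (i (t f)) f = f \<and> cmp f (i (s f)) = f"
    using assms unfolding strict_2rack_def by (elim conjE) blast
  have cl0: "\<And>x y. x \<in> R0 \<Longrightarrow> y \<in> R0 \<Longrightarrow> op0 x y \<in> R0"
   and bij0: "\<And>y. y \<in> R0 \<Longrightarrow> bij_betw (\<lambda>x. op0 x y) R0 R0"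
   and e0R: "e0 \<in> R0"
    using P0 unfolding pointed_rack_def rack_def by blast+
  have cl1: "\<And>x y. x \<in> R1 \<Longrightarrow> y \<in> R1 \<Longrightarrow> op1 x y \<in> R1"
   and bij1: "\<And>y. y \<in> R1 \<Longrightarrow> bij_betw (\<lambda>x. op1 x y) R1 R1"
   and sd1: "\<And>x y z. x \<in> R1 \<Longrightarrow> y \<in> R1 \<Longrightarrow> z \<in> R1 \<Longrightarrow> op1 (op1 x y) z = op1 (op1 x z) (op1 y z)"
   and e1R: "e1 \<in> R1" and e1l: "\<And>x. x \<in> R1 \<Longrightarrow> op1 e1 x = e1" and e1r: "\<And>x. x \<in> R1 \<Longrightarrow> op1 x e1 = x"
    using P1 unfolding pointed_rack_def rack_def by blast+
  have sR: "\<And>x. x \<in> R1 \<Longrightarrow> s x \<in> R0"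
   and sh: "\<And>x y. x \<in> R1 \<Longrightarrow> y \<in> R1 \<Longrightarrow> s (op1 x y) = op0 (s x) (s y)"
    using Hs unfolding pointed_rack_hom_def rack_hom_def by blast+
  have tR: "\<And>x. x \<in> R1 \<Longrightarrow> t x \<in> R0"
   and th: "\<And>x y. x \<in> R1 \<Longrightarrow> y \<in> R1 \<Longrightarrow> t (op1 x y) = op0 (t x) (t y)"
    using Ht unfolding pointed_rack_hom_def rack_hom_def by blast+
  have iR: "\<And>x. x \<in> R0 \<Longrightarrow> i x \<in> R1"
   and ih: "\<And>x y. x \<in> R0 \<Longrightarrow> y \<in> R0 \<Longrightarrow> i (op0 x y) = op1 (i x) (i y)"
   and ie: "i e0 = e1"
    using Hi unfolding pointed_rack_hom_def rack_hom_def by blast+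
  have si: "\<And>x. x \<in> R0 \<Longrightarrow> s (i x) = x" and ti: "\<And>x. x \<in> R0 \<Longrightarrow> t (i x) = x" using C3 by auto
  have cmph: "\<And>g f g' f'. g\<in>R1 \<Longrightarrow> f\<in>R1 \<Longrightarrow> g'\<in>R1 \<Longrightarrow> f'\<in>R1 \<Longrightarrow> s g = t f \<Longrightarrow> s g' = t f' \<Longrightarrow>
        cmp (op1 g g') (op1 f f') = op1 (cmp g f) (cmp g' f')" using C2 by blast
  have idl: "\<And>f. f \<in> R1 \<Longrightarrow> cmp (i (t f)) f = f" and idr: "\<And>f. f \<in> R1 \<Longrightarrow> cmp f (i (s f)) = f"
    using C6 by auto
  have ker: "op1 f g = f \<and> op1 g f = g" if f: "f \<in> R1" "t f = e0" and g: "g \<in> R1" "s g = e0" for f g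
  proof -
    have F: "cmp e1 f = f" using idl[OF f(1)] f ie by simp
    have G: "cmp g e1 = g" using idr[OF g(1)] g ie by simp
    have se1: "s e1 = e0" "t e1 = e0" using si[OF e0R] ti[OF e0R] ie by auto
    have "op1 f g = op1 (cmp e1 f) (cmp g e1)" using F G by simp
    also have "\<dots> = cmp (op1 e1 g) (op1 f e1)" using cmph[OF e1R f(1) g(1) e1R] se1 f g by simp
    also have "\<dots> = f" using e1l[OF g(1)] e1r[OF f(1)] F by simp
    finally have 1: "op1 f g = f" .
    have "op1 g f = op1 (cmp g e1) (cmp e1 f)" using F G by simp
    also have "\<dots> = cmp (op1 g e1) (op1 e1 f)" using cmph[OF g(1) e1R e1R f(1)] se1 f g by simp
    also have "\<dots> = g" using e1l[OF f(1)] e1r[OF g(1)] G by simp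
    finally show ?thesis using 1 by simp
  qed
  have sub: "subrack (i ` R0) R1 op1"
    unfolding subrack_def rack_def
  proof (intro conjI ballI)
    show "i ` R0 \<subseteq> R1" using iR by auto
  next
    fix x y assume "x \<in> i ` R0" "y \<in> i ` R0"
    then show "op1 x y \<in> i ` R0" using cl0 by (auto simp flip: ih)
  next
    fix x y z assume "x \<in> i ` R0" "y \<in> i ` R0" "z \<in> i ` R0"
    then show "op1 (op1 x y) z = op1 (op1 x z) (op1 y z)" using iR by (intro sd1) auto
  next
    fix y assume y: "y \<in> i ` R0"
    then obtain b where b: "b \<in> R0" "y = i b" by auto
    show "bij_betw (\<lambda>x. op1 x y) (i ` R0) (i ` R0)"
      unfolding bij_betw_def
    proof
      show "inj_on (\<lambda>x. op1 x y) (i ` R0)"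
        using bij1[OF iR[OF b(1)]] b iR unfolding bij_betw_def
        by (meson image_subsetI inj_on_subset)
      show "(\<lambda>x. op1 x y) ` i ` R0 = i ` R0"
      proof
        show "(\<lambda>x. op1 x y) ` i ` R0 \<subseteq> i ` R0" using b cl0 by (auto simp flip: ih)
      next
        show "i ` R0 \<subseteq> (\<lambda>x. op1 x y) ` i ` R0"
        proof
          fix z assume "z \<in> i ` R0"
          then obtain c where c: "c \<in> R0" "z = i c" by auto
          from bij0[OF b(1)] c obtain d where d: "d \<in> R0" "op0 d b = c"
            unfolding bij_betw_def by force
          have "z = op1 (i d) y" using c d b ih[OF d(1) b(1)] by simp
          then show "z \<in> (\<lambda>x. op1 x y) ` i ` R0" using d by auto
        qed
      qed
    qed
  qed
  have hs: "rack_hom R1 op1 (i ` R0) op1 (i \<circ> s)"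
    unfolding rack_hom_def
  proof (intro conjI ballI)
    fix x assume "x \<in> R1" then show "(i \<circ> s) x \<in> i ` R0" using sR by simp
  next
    fix x y assume "x \<in> R1" "y \<in> R1"
    then show "(i \<circ> s) (op1 x y) = op1 ((i \<circ> s) x) ((i \<circ> s) y)"
      using sh ih sR by simp
  qed
  have ht: "rack_hom R1 op1 (i ` R0) op1 (i \<circ> t)"
    unfolding rack_hom_def
  proof (intro conjI ballI)
    fix x assume "x \<in> R1" then show "(i \<circ> t) x \<in> i ` R0" using tR by simp
  next
    fix x y assume "x \<in> R1" "y \<in> R1"
    then show "(i \<circ> t) (op1 x y) = op1 ((i \<circ> t) x) ((i \<circ> t) y)"
      using th ih tR by simp
  qed
  have idN: "\<forall>x\<in>i ` R0. (i \<circ> s) x = x \<and> (i \<circ> t) x = x"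
  proof
    fix x assume "x \<in> i ` R0"
    then obtain a where "a \<in> R0" "x = i a" by blast
    then show "(i \<circ> s) x = x \<and> (i \<circ> t) x = x" using si ti by simp
  qed
  have k1: "\<forall>f\<in>rack_kernel R1 t e0. \<forall>g\<in>rack_kernel R1 s e0. op1 f g = f \<and> op1 g f = g"
  proof (intro ballI)
    fix f g assume "f \<in> rack_kernel R1 t e0" "g \<in> rack_kernel R1 s e0"
    then show "op1 f g = f \<and> op1 g f = g" unfolding rack_kernel_def by (intro ker) auto
  qed
  have injs: "s x = e0" if "x \<in> R1" "i (s x) = e1" for x
  proof -
    have "s x = s (i (s x))" using si[OF sR[OF that(1)]] by simp
    also have "\<dots> = s (i e0)" using that ie by simp
    also have "\<dots> = e0" using si e0R by simp
    finally show ?thesis .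
  qed
  have injt: "t x = e0" if "x \<in> R1" "i (t x) = e1" for x
  proof -
    have "t x = t (i (t x))" using ti[OF tR[OF that(1)]] by simp
    also have "\<dots> = t (i e0)" using that ie by simp
    also have "\<dots> = e0" using ti e0R by simp
    finally show ?thesis .
  qed
  have k2: "\<forall>f\<in>rack_kernel R1 (i \<circ> s) e1. \<forall>g\<in>rack_kernel R1 (i \<circ> t) e1. op1 f g = f \<and> op1 g f = g"
  proof (intro ballI)
    fix f g assume f: "f \<in> rack_kernel R1 (i \<circ> s) e1" and g: "g \<in> rack_kernel R1 (i \<circ> t) e1"
    from f have f1: "f \<in> R1" "s f = e0" unfolding rack_kernel_def using injs by auto
    from g have g1: "g \<in> R1" "t g = e0" unfolding rack_kernel_def using injt by auto
    from ker[OF g1 f1] show "op1 f g = f \<and> op1 g f = g" by blast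
  qed
  have oc: "onecat_rack R1 op1 e1 (i ` R0) (i \<circ> s) (i \<circ> t)"
    unfolding onecat_rack_def using P1 sub hs ht idN k2 by (intro conjI)
  show ?thesis using sub hs ht idN k1 oc by (intro conjI)
qed

end
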